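(* Let $M$ and $\gamma$ be positive integers with $\gamma$ squarefree, and let $[a_1:b_1]\in\mathbb{P}^1(\mathbb{Z}/M\mathbb{Z})$. Then for $N\ge1$, $$\left|\left\{(a,b)\in\mathbb{Z}^2\setminus\{(0,0)\}:(a,b)\in\mathcal{R}_N,\ \gamma\mid\gcd(a,b),\ (a,b)\equiv\lambda(a_1,b_1)\bmod M\text{ for some }\lambda\in\mathbb{Z}\right\}\right|=\frac{N^{\frac{1}{6m}}V\gcd(\gamma,M)}{\gamma^2M}+O\!\left(\frac{N^{\frac{1}{12m}}}{\gamma}\right),$$ where the implied constant depends only on $\mathcal{R}_1$. Moreover there is a constant $c>0$ depending only on $\mathcal{R}_1$ such that the set is empty if $\gamma>cN^{\frac{1}{12m}}$.
   Context: Let $m$ be a positive integer and $f,g\in\mathbb{Z}[t]$ with $4f^3+27g^2\ne0$, no common real root, and $\max\{\frac12\deg f,\frac13\deg g\}=2m$. Let $A(x,y)=y^{4m}f(x/y)$, $B(x,y)=y^{6m}g(x/y)$. $\mathcal{R}_N=\{(x,y)\in\mathbb{R}^2:|A(x,y)|\le(N/4)^{1/3},\ |B(x,y)|\le(N/27)^{1/2}\}$ and $V=\mathrm{Vol}(\mathcal{R}_1)$. Elements $[a_1:b_1]\in\mathbb{P}^1(\mathbb{Z}/M\mathbb{Z})$ are represented by $a_1,b_1\in\mathbb{Z}$ with $\gcd(a_1,b_1,M)=1$. *)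

theory Defs
  imports "HOL-Analysis.Analysis" "HOL-Computational_Algebra.Computational_Algebra" "HOL-Number_Theory.Cong"
begin

text \<open>Homogenisation of degree d of an integer polynomial p:
  hom_form d p x y = y^d * p(x/y) (as a polynomial identity), i.e.
  the sum over i of coeff p i * x^i * y^(d-i). Used only when degree p \<le> d.\<close>
definition hom_form :: "nat \<Rightarrow> int poly \<Rightarrow> real \<Rightarrow> real \<Rightarrow> real" where
  "hom_form d p x y = (\<Sum>i\<le>degree p. real_of_int (coeff p i) * x ^ i * y ^ (d - i))"

definition region :: "int poly \<Rightarrow> int poly \<Rightarrow> nat \<Rightarrow> real \<Rightarrow> (real \<times> real) set" where
  "region f g m N = {(x, y). \<bar>hom_form (4*m) f x y\<bar> \<le> (N / 4) powr (1/3)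
                            \<and> \<bar>hom_form (6*m) g x y\<bar> \<le> (N / 27) powr (1/2)}"

definition count_set :: "int poly \<Rightarrow> int poly \<Rightarrow> nat \<Rightarrow> real \<Rightarrow> int \<Rightarrow> int \<Rightarrow> int \<Rightarrow> int \<Rightarrow> (int \<times> int) set" where
  "count_set f g m N \<gamma> M a1 b1 = {(a, b). (a, b) \<noteq> (0, 0)
      \<and> (real_of_int a, real_of_int b) \<in> region f g m N
      \<and> \<gamma> dvd gcd a b
      \<and> (\<exists>l::int. [a = l * a1] (mod M) \<and> [b = l * b1] (mod M))}"

end

theory Submission
  imports Defs
begin


lemma one_dim_count:
  fixes E :: "real set" and c d R :: real and k :: nat
  assumes Em: "E \<in> sets lborel" and Eb: "E \<subseteq> {-R..R}" and ff: "finite (frontier E)"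
    and fk: "card (frontier E) \<le> k" and d: "d > 0"
  shows "finite {j::int. c + d * j \<in> E}"
    "\<bar>d * card {j::int. c + d * j \<in> E} - measure lborel E\<bar> \<le> d * k"
proof -
  define cell where "cell j = {c + d * of_int j ..< c + d * (of_int j + 1)}" for j :: int
  define fl where "fl x = \<lfloor>(x - c) / d\<rfloor>" for x
  define J where "J = {fl (-R) .. fl R}"
  have finJ: "finite J" unfolding J_def by simp
  have incell: "x \<in> cell (fl x)" for x
  proof -
    have "of_int (fl x) \<le> (x - c) / d" "(x - c) / d < of_int (fl x) + 1"
      unfolding fl_def by linarith+
    then show ?thesis using d unfolding cell_def by (auto simp: field_simps)
  qed
  have cellfl: "x \<in> cell j \<Longrightarrow> fl x = j" for x j
  proof -
    assume "x \<in> cell j"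
    then have "of_int j \<le> (x - c) / d" "(x - c) / d < of_int j + 1"
      using d unfolding cell_def by (auto simp: field_simps)
    then show ?thesis unfolding fl_def by linarith
  qed
  have flmono: "x \<le> y \<Longrightarrow> fl x \<le> fl y" for x y
    unfolding fl_def using d by (intro floor_mono divide_right_mono) auto
  have flJ: "x \<in> E \<Longrightarrow> fl x \<in> J" for x
    using Eb flmono unfolding J_def by auto
  have sub: "{j::int. c + d * j \<in> E} \<subseteq> J"
  proof
    fix j assume "j \<in> {j::int. c + d * j \<in> E}"
    then have "c + d * j \<in> E" by simp
    moreover have "c + d * j \<in> cell j" unfolding cell_def using d by auto
    ultimately show "j \<in> J" using flJ cellfl by fastforce
  qed
  show fin: "finite {j::int. c + d * j \<in> E}" using finite_subset[OF sub finJ] .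
  have cellm: "cell j \<in> sets lborel" for j unfolding cell_def by simp
  have cellmeas: "measure lborel (cell j) = d" for j unfolding cell_def using d
    by (simp add: algebra_simps)
  have Ecover: "E = (\<Union>j\<in>J. E \<inter> cell j)"
    using incell flJ by blast
  have disj: "disjoint_family_on (\<lambda>j. E \<inter> cell j) J"
    unfolding disjoint_family_on_def using cellfl by blast
  have cellfin: "emeasure lborel (cell j) < \<infinity>" for j
    unfolding cell_def using d by (subst emeasure_lborel_Ico) auto
  have fin_em: "emeasure lborel (E \<inter> cell j) \<noteq> \<infinity>" for j
  proof -
    have "emeasure lborel (E \<inter> cell j) \<le> emeasure lborel (cell j)"
      by (intro emeasure_mono cellm) auto
    also have "\<dots> < \<infinity>" by (rule cellfin)
    finally show ?thesis by simp
  qed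
  have meq: "measure lborel E = (\<Sum>j\<in>J. measure lborel (E \<inter> cell j))"
    apply (subst Ecover)
    apply (rule measure_finite_Union[OF finJ _ disj fin_em])
    using Em cellm by auto
  have ceq: "real (card {j::int. c + d * j \<in> E}) = (\<Sum>j\<in>J. if c + d * j \<in> E then 1 else 0)"
  proof -
    have "{j::int. c + d * j \<in> E} = {j\<in>J. c + d * j \<in> E}" using sub by blast
    then show ?thesis by (simp only: real_of_card sum.inter_filter[OF finJ])
  qed
  define t where "t j = d * (if c + d * j \<in> E then 1 else 0) - measure lborel (E \<inter> cell j)" for j
  have diff: "d * card {j::int. c + d * j \<in> E} - measure lborel E = (\<Sum>j\<in>J. t j)"
    unfolding ceq meq t_def by (simp add: sum_distrib_left sum_subtractf)
  define B where "B = {j\<in>J. cell j \<inter> frontier E \<noteq> {}}"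
  have t0: "t j = 0" if "j \<in> J - B" for j
  proof -
    have nf: "cell j \<inter> frontier E = {}" using that B_def by auto
    have conn: "connected (cell j)" unfolding cell_def by (auto simp add: is_interval_connected_1[symmetric] is_interval_1)
    have cj: "c + d * j \<in> cell j" unfolding cell_def using d by auto
    show ?thesis
    proof (cases "cell j \<inter> E = {}")
      case True
      then show ?thesis using cj unfolding t_def by (auto simp: Int_commute)
    next
      case False
      then have "cell j - E = {}" using connected_Int_frontier[OF conn] nf by blast
      then have "E \<inter> cell j = cell j" by blast
      then show ?thesis using cj \<open>cell j - E = {}\<close> cellmeas unfolding t_def by auto
    qed
  qed
  have tb: "\<bar>t j\<bar> \<le> d" for j
  proof -
    have "measure lborel (E \<inter> cell j) \<le> measure lborel (cell j)"
      using Em cellm cellfin by (intro measure_mono_fmeasurable) (auto simp: fmeasurable_def)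
    then show ?thesis using d cellmeas unfolding t_def by auto
  qed
  have Bsub: "B \<subseteq> fl ` frontier E"
    unfolding B_def using cellfl by blast
  have cB: "card B \<le> k"
    using card_image_le[OF ff, of fl] card_mono[OF finite_imageI[OF ff] Bsub] fk by linarith
  have "\<bar>\<Sum>j\<in>J. t j\<bar> = \<bar>\<Sum>j\<in>B. t j\<bar>"
    by (rule arg_cong[where f=abs], rule sum.mono_neutral_right[OF finJ]) (use t0 B_def in auto)
  also have "\<dots> \<le> (\<Sum>j\<in>B. \<bar>t j\<bar>)" by (rule sum_abs)
  also have "\<dots> \<le> (\<Sum>j\<in>B. d)" by (intro sum_mono tb)
  also have "\<dots> = d * card B" by simp
  also have "\<dots> \<le> d * k" using cB d by simp
  finally show "\<bar>d * card {j::int. c + d * j \<in> E} - measure lborel E\<bar> \<le> d * k" using diff by simp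
qed

lemma lattice_count:
  fixes S :: "(real \<times> real) set" and L :: "(int \<times> int) set" and k :: nat
    and d1 d2 :: int and cc :: "int \<Rightarrow> int" and R :: real
  assumes Sc: "closed S" and Sb: "S \<subseteq> {-R..R} \<times> {-R..R}" and R: "R \<ge> 0"
    and rowf: "\<And>y. finite (frontier {x. (x,y) \<in> S}) \<and> card (frontier {x. (x,y) \<in> S}) \<le> k"
    and colf: "\<And>x. finite (frontier {y. (x,y) \<in> S}) \<and> card (frontier {y. (x,y) \<in> S}) \<le> k"
    and d1: "d1 > 0" and d2: "d2 > 0"
    and L: "\<And>a b. (a,b) \<in> L \<longleftrightarrow> d2 dvd b \<and> d1 dvd (a - cc (b div d2))"
  shows "finite {p\<in>L. (real_of_int (fst p), real_of_int (snd p)) \<in> S}"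
    "\<bar>real (card {p\<in>L. (real_of_int (fst p), real_of_int (snd p)) \<in> S}) - measure lborel S / (d1 * d2)\<bar>
       \<le> k * (2 * R / d2 + 1) + 2 * R * k / d1"
proof -
  define P where "P = {p\<in>L. (real_of_int (fst p), real_of_int (snd p)) \<in> S}"
  define J where "J = {-\<lfloor>R / d2\<rfloor> .. \<lfloor>R / d2\<rfloor>}"
  define E where "E j = {x. (x, real_of_int (d2 * j)) \<in> S}" for j
  define F where "F x = {y. (x, y) \<in> S}" for x
  define B where "B j = {i::int. real_of_int (cc j) + real_of_int d1 * real_of_int i \<in> E j}" for j
  have finJ: "finite J" unfolding J_def by simp
  have cardJ: "real (card J) \<le> 2 * R / d2 + 1"
  proof -
    have "card J = nat (2 * \<lfloor>R / d2\<rfloor> + 1)" unfolding J_def by simp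
    moreover have "\<lfloor>R / d2\<rfloor> \<ge> 0" using R d2 by simp
    ultimately have "real (card J) = 2 * real_of_int \<lfloor>R / d2\<rfloor> + 1" by simp
    moreover have "real_of_int \<lfloor>R / d2\<rfloor> \<le> R / d2" by linarith
    moreover have "2 * R / d2 = 2 * (R / d2)" by simp
    ultimately show ?thesis by linarith
  qed
  have inJ: "j \<in> J" if "\<bar>real_of_int (d2 * j)\<bar> \<le> R" for j
  proof -
    have "\<bar>real_of_int j\<bar> \<le> R / d2" using that d2 by (simp add: abs_mult field_simps)
    then show ?thesis unfolding J_def by (simp add: abs_le_iff) linarith
  qed
  have Sm: "S \<in> sets lborel" using Sc by simp
  have bS: "bounded S"
    by (rule bounded_subset[OF _ Sb]) (simp add: bounded_Times)
  have Ec: "closed (E j)" for j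
  proof -
    have "E j = (\<lambda>x. (x, real_of_int (d2 * j))) -` S" unfolding E_def by auto
    then show ?thesis by (simp only:) (intro continuous_closed_vimage Sc continuous_intros)
  qed
  have Fc: "closed (F x)" for x
  proof -
    have "F x = (\<lambda>y. (x, y)) -` S" unfolding F_def by auto
    then show ?thesis by (simp only:) (intro continuous_closed_vimage Sc continuous_intros)
  qed
  have Eb: "E j \<subseteq> {-R..R}" for j using Sb unfolding E_def by auto
  have Fb: "F x \<subseteq> {-R..R}" for x using Sb unfolding F_def by auto
  have row: "finite (B j) \<and> \<bar>real (card (B j)) - measure lborel (E j) / d1\<bar> \<le> k" for j
  proof -
    have fr: "finite (frontier (E j))" "card (frontier (E j)) \<le> k"
      using rowf[of "real_of_int (d2 * j)"] unfolding E_def by auto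
    note o = one_dim_count[OF _ Eb fr, of d1 "real_of_int (cc j)"]
    have fB: "finite (B j)" using o Ec d1 unfolding B_def by auto
    have "\<bar>d1 * real (card (B j)) - measure lborel (E j)\<bar> \<le> d1 * k"
      using o Ec d1 unfolding B_def by auto
    moreover have "real (card (B j)) - measure lborel (E j) / d1 = (d1 * real (card (B j)) - measure lborel (E j)) / d1"
      using d1 by (simp add: field_simps)
    ultimately have "\<bar>real (card (B j)) - measure lborel (E j) / d1\<bar> \<le> k"
      using d1 by (simp add: abs_divide divide_le_eq mult.commute)
    with fB show ?thesis by simp
  qed
  define \<phi> where "\<phi> = (\<lambda>(j::int, i::int). (cc j + d1 * i, d2 * j))"
  have bij: "bij_betw \<phi> (Sigma J B) P"
  proof (rule bij_betwI')
    fix p q assume "p \<in> Sigma J B" "q \<in> Sigma J B"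
    then show "(\<phi> p = \<phi> q) = (p = q)" using d1 d2 unfolding \<phi>_def by (auto split: prod.splits)
  next
    fix p assume "p \<in> Sigma J B"
    then obtain j i where p: "p = (j, i)" "j \<in> J" "i \<in> B j" by auto
    have "(cc j + d1 * i, d2 * j) \<in> L" using d2 by (subst L) auto
    moreover have "(real_of_int (cc j + d1 * i), real_of_int (d2 * j)) \<in> S"
      using p(3) unfolding B_def E_def by simp
    ultimately show "\<phi> p \<in> P" unfolding P_def \<phi>_def p by simp
  next
    fix q assume "q \<in> P"
    then obtain a b where q: "q = (a, b)" "(a, b) \<in> L" "(real_of_int a, real_of_int b) \<in> S"
      unfolding P_def by (cases q) auto
    define j where "j = b div d2"
    define i where "i = (a - cc j) div d1"
    have "d2 dvd b" "d1 dvd (a - cc j)" using q(2) L unfolding j_def by auto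
    then have b: "b = d2 * j" and a: "a = cc j + d1 * i" unfolding i_def j_def by auto
    have "real_of_int b \<in> {-R..R}" using q(3) Sb by blast
    then have "\<bar>real_of_int b\<bar> \<le> R" by auto
    then have "j \<in> J" using inJ b by simp
    moreover have "i \<in> B j" using q(3) unfolding B_def E_def a b by simp
    ultimately show "\<exists>p\<in>Sigma J B. q = \<phi> p" unfolding \<phi>_def q using a b by auto
  qed
  have finB: "finite (B j)" for j using row by blast
  have cardP: "card P = (\<Sum>j\<in>J. card (B j))"
    using bij_betw_same_card[OF bij] card_SigmaI[OF finJ, of B] finB by simp
  have finP: "finite P" using bij_betw_finite[OF bij] finJ finB by auto
  then show "finite {p\<in>L. (real_of_int (fst p), real_of_int (snd p)) \<in> S}" unfolding P_def .
  define \<Sigma> where "\<Sigma> = (\<Sum>j\<in>J. measure lborel (E j))"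
  have step1: "\<bar>real (card P) - \<Sigma> / d1\<bar> \<le> k * (2 * R / d2 + 1)"
  proof -
    have "real (card P) - \<Sigma> / d1 = (\<Sum>j\<in>J. real (card (B j)) - measure lborel (E j) / d1)"
      unfolding cardP \<Sigma>_def by (simp add: sum_subtractf sum_divide_distrib)
    then have "\<bar>real (card P) - \<Sigma> / d1\<bar> \<le> (\<Sum>j\<in>J. \<bar>real (card (B j)) - measure lborel (E j) / d1\<bar>)"
      by (simp add: sum_abs)
    also have "\<dots> \<le> (\<Sum>j\<in>J. real k)" by (intro sum_mono) (use row in blast)
    also have "\<dots> = k * real (card J)" by simp
    also have "\<dots> \<le> k * (2 * R / d2 + 1)" by (intro mult_left_mono cardJ) simp
    finally show ?thesis .
  qed
  have Em: "E j \<in> sets lborel" for j using Ec by simp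
  have Fm: "F x \<in> sets lborel" for x using Fc by simp
  have finE: "emeasure lborel (E j) < \<infinity>" for j
    by (rule emeasure_bounded_finite, rule bounded_subset[OF _ Eb]) simp
  have intE: "integrable lborel (indicator (E j) :: real \<Rightarrow> real)" for j
    using Em finE by (simp add: integrable_indicator_iff)
  define h where "h x = (\<Sum>j\<in>J. indicator (E j) x :: real)" for x
  have hint: "integrable lborel h" unfolding h_def by (rule Bochner_Integration.integrable_sum) (rule intE)
  have ih: "integral\<^sup>L lborel h = \<Sigma>"
    unfolding h_def \<Sigma>_def by (subst Bochner_Integration.integral_sum) (use intE in auto)
  have hcard: "h x = real (card {j::int. 0 + real_of_int d2 * real_of_int j \<in> F x})" for x
  proof -
    have "{j::int. 0 + real_of_int d2 * real_of_int j \<in> F x} = {j\<in>J. x \<in> E j}"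
    proof (intro set_eqI iffI)
      fix j assume "j \<in> {j::int. 0 + real_of_int d2 * real_of_int j \<in> F x}"
      then have "(x, real_of_int (d2 * j)) \<in> S" unfolding F_def by simp
      moreover then have "real_of_int (d2 * j) \<in> {-R..R}" using Sb by blast
      ultimately show "j \<in> {j\<in>J. x \<in> E j}" using inJ unfolding E_def by auto
    qed (auto simp: E_def F_def)
    moreover have "h x = (\<Sum>j\<in>J. if x \<in> E j then 1 else 0)" unfolding h_def by (intro sum.cong) (auto simp: indicator_def)
    ultimately show ?thesis by (simp only: real_of_card sum.inter_filter[OF finJ])
  qed
  have col: "\<bar>d2 * h x - measure lborel (F x)\<bar> \<le> indicator {-R..R} x * (real_of_int d2 * real k)" for x
  proof (cases "x \<in> {-R..R}")
    case True
    have fr: "finite (frontier (F x))" "card (frontier (F x)) \<le> k"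
      using colf[of x] unfolding F_def by auto
    note o = one_dim_count[OF Fm Fb fr, of d2 0]
    then show ?thesis using True d2 hcard by simp
  next
    case False
    then have "F x = {}" using Sb unfolding F_def by auto
    moreover have "h x = 0" using False Eb unfolding h_def by (intro sum.neutral) (force simp: indicator_def)
    ultimately show ?thesis using False by simp
  qed
  have colA: "d2 * h x \<le> measure lborel (F x) + indicator {-R..R} x * (real_of_int d2 * real k)" for x
    using col[of x] by (simp add: abs_le_iff)
  have colB: "measure lborel (F x) - indicator {-R..R} x * (real_of_int d2 * real k) \<le> d2 * h x" for x
    using col[of x] by (simp add: abs_le_iff)
  have intS: "integrable (lborel \<Otimes>\<^sub>M lborel) (indicator S :: real \<times> real \<Rightarrow> real)"
    unfolding lborel_prod using Sm emeasure_bounded_finite[OF bS] by (simp add: integrable_indicator_iff)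
  have inner: "(\<integral>y. indicator S (x, y) \<partial>lborel) = measure lborel (F x)" for x
  proof -
    have "(\<lambda>y. indicator S (x, y) :: real) = indicator (F x)" unfolding F_def by (auto simp: indicator_def)
    then show ?thesis using Fm by simp
  qed
  have mFint: "integrable lborel (\<lambda>x. measure lborel (F x))"
    using lborel_pair.integrable_fst'[OF intS] unfolding inner .
  have mFeq: "(\<integral>x. measure lborel (F x) \<partial>lborel) = measure lborel S"
    using lborel_pair.integral_fst'[OF intS] unfolding inner lborel_prod using Sm by simp
  have indint: "integrable lborel (\<lambda>x. indicator {-R..R} x * (real_of_int d2 * real k) :: real)"
    by (intro integrable_mult_left) (use R in \<open>simp add: integrable_indicator_iff emeasure_lborel_Icc\<close>)
  have indI: "(\<integral>x. indicator {-R..R} x * (real_of_int d2 * real k) \<partial>lborel) = 2 * R * (real_of_int d2 * real k)"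
    using R by simp
  have up: "d2 * \<Sigma> \<le> measure lborel S + 2 * R * (real_of_int d2 * real k)"
  proof -
    have "d2 * \<Sigma> = (\<integral>x. d2 * h x \<partial>lborel)" using ih by simp
    also have "\<dots> \<le> (\<integral>x. measure lborel (F x) + indicator {-R..R} x * (real_of_int d2 * real k) \<partial>lborel)"
      by (rule integral_mono[OF Bochner_Integration.integrable_mult_right[OF hint] Bochner_Integration.integrable_add[OF mFint indint]])
         (rule colA)
    also have "\<dots> = measure lborel S + 2 * R * (real_of_int d2 * real k)"
      by (subst Bochner_Integration.integral_add[OF mFint indint]) (simp only: mFeq indI)
    finally show ?thesis .
  qed
  have lo: "measure lborel S - 2 * R * (real_of_int d2 * real k) \<le> d2 * \<Sigma>"
  proof -
    have "measure lborel S - 2 * R * (real_of_int d2 * real k) = (\<integral>x. measure lborel (F x) - indicator {-R..R} x * (real_of_int d2 * real k) \<partial>lborel)"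
      by (subst Bochner_Integration.integral_diff[OF mFint indint]) (simp only: mFeq indI)
    also have "\<dots> \<le> (\<integral>x. d2 * h x \<partial>lborel)"
      by (rule integral_mono[OF Bochner_Integration.integrable_diff[OF mFint indint] Bochner_Integration.integrable_mult_right[OF hint]])
         (rule colB)
    also have "\<dots> = d2 * \<Sigma>" using ih by simp
    finally show ?thesis .
  qed
  have step2: "\<bar>\<Sigma> / d1 - measure lborel S / (d1 * d2)\<bar> \<le> 2 * R * k / d1"
  proof -
    have "\<Sigma> / d1 - measure lborel S / (d1 * d2) = (d2 * \<Sigma> - measure lborel S) / (d1 * d2)"
      using d1 d2 by (simp add: field_simps)
    moreover have "\<bar>d2 * \<Sigma> - measure lborel S\<bar> \<le> 2 * R * (real_of_int d2 * real k)" using up lo by linarith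
    ultimately have "\<bar>\<Sigma> / d1 - measure lborel S / (d1 * d2)\<bar> = \<bar>d2 * \<Sigma> - measure lborel S\<bar> / (d1 * d2)"
      and "\<bar>d2 * \<Sigma> - measure lborel S\<bar> \<le> 2 * R * (real_of_int d2 * real k)"
      using d1 d2 by (simp_all add: abs_divide abs_mult)
    then have "\<bar>\<Sigma> / d1 - measure lborel S / (d1 * d2)\<bar> \<le> 2 * R * (real_of_int d2 * real k) / (d1 * d2)"
      using d1 d2 by (simp only:) (rule divide_right_mono, auto)
    also have "\<dots> = 2 * R * k / d1" using d2 by (simp add: field_simps)
    finally show ?thesis .
  qed
  show "\<bar>real (card {p\<in>L. (real_of_int (fst p), real_of_int (snd p)) \<in> S}) - measure lborel S / (d1 * d2)\<bar>
       \<le> k * (2 * R / d2 + 1) + 2 * R * k / d1"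
    using step1 step2 unfolding P_def[symmetric] by linarith
qed
lemma int_subgroup:
  fixes H :: "int set"
  assumes H0: "0 \<in> H" and Hs: "\<And>x y. x \<in> H \<Longrightarrow> y \<in> H \<Longrightarrow> x - y \<in> H"
    and pH: "p \<in> H" and p: "p > 0"
  shows "\<exists>e>0. \<forall>x. x \<in> H \<longleftrightarrow> e dvd x"
proof -
  have Hn: "x \<in> H \<Longrightarrow> - x \<in> H" for x using Hs[OF H0] by simp
  have Ha: "x \<in> H \<Longrightarrow> y \<in> H \<Longrightarrow> x + y \<in> H" for x y using Hs[OF _ Hn[of y]] by simp
  define e where "e = (LEAST n::nat. n > 0 \<and> int n \<in> H)"
  have ex: "nat p > 0 \<and> int (nat p) \<in> H" using p pH by simp
  have e1: "e > 0 \<and> int e \<in> H" unfolding e_def by (rule LeastI[of _ "nat p"]) (rule ex)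
  have emin: "n > 0 \<Longrightarrow> int n \<in> H \<Longrightarrow> e \<le> n" for n unfolding e_def by (rule Least_le) simp
  have mulN: "int e * int n \<in> H" for n
  proof (induction n)
    case 0 then show ?case using H0 by simp
  next
    case (Suc n)
    have "int e * int (Suc n) = int e * int n + int e" by (simp add: algebra_simps)
    then show ?case using Ha[OF Suc e1[THEN conjunct2]] by simp
  qed
  have mul: "int e * t \<in> H" for t
  proof (cases "t \<ge> 0")
    case True then show ?thesis using mulN[of "nat t"] by simp
  next
    case False then show ?thesis using Hn[OF mulN[of "nat (-t)"]] by simp
  qed
  show ?thesis
  proof (intro exI[of _ "int e"] conjI allI iffI)
    show "int e > 0" using e1 by simp
  next
    fix x assume "x \<in> H"
    have "x mod int e = x - int e * (x div int e)" by (simp add: algebra_simps minus_div_mult_eq_mod[symmetric])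
    then have r: "x mod int e \<in> H" using Hs[OF \<open>x \<in> H\<close> mul] by simp
    have "0 \<le> x mod int e" "x mod int e < int e" using e1 by auto
    moreover have "x mod int e = 0"
    proof (rule ccontr)
      assume "x mod int e \<noteq> 0"
      then have "e \<le> nat (x mod int e)" using emin[of "nat (x mod int e)"] r \<open>0 \<le> x mod int e\<close> by simp
      then show False using \<open>x mod int e < int e\<close> \<open>0 \<le> x mod int e\<close> by linarith
    qed
    then show "int e dvd x" by (simp add: dvd_eq_mod_eq_0)
  next
    fix x assume "int e dvd x"
    then obtain t where "x = int e * t" by (auto elim: dvdE)
    then show "x \<in> H" using mul by simp
  qed
qed


lemma dvd_from_pair:
  fixes x l a1 b1 :: int
  assumes "x dvd l * a1" "x dvd l * b1" "coprime x (gcd a1 b1)"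
  shows "x dvd l"
proof -
  have "x dvd gcd (l * a1) (l * b1)" using assms by simp
  then have "x dvd l * gcd a1 b1" by (simp add: gcd_mult_left)
  then show ?thesis using assms(3) by (simp add: coprime_dvd_mult_left_iff)
qed

lemma box_struct:
  fixes \<Lambda> :: "(int \<times> int) set" and d1 d2 Q :: int and cc :: "int \<Rightarrow> int"
  assumes d1: "d1 > 0" and d2: "d2 > 0" and dQ1: "d1 dvd Q" and dQ2: "d2 dvd Q" and Q: "Q > 0"
    and memb: "\<And>a b. (a,b) \<in> \<Lambda> \<longleftrightarrow> d2 dvd b \<and> d1 dvd (a - cc (b div d2))"
  shows "int (card {p\<in>\<Lambda>. fst p \<in> {0..<Q} \<and> snd p \<in> {0..<Q}}) = (Q div d1) * (Q div d2)"
proof -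
  define \<phi> where "\<phi> = (\<lambda>(j::int, i::int). (cc j mod d1 + d1 * i, d2 * j))"
  have bij: "bij_betw \<phi> ({0..<Q div d2} \<times> {0..<Q div d1}) {p\<in>\<Lambda>. fst p \<in> {0..<Q} \<and> snd p \<in> {0..<Q}}"
  proof (rule bij_betwI')
    fix p q assume "p \<in> {0..<Q div d2} \<times> {0..<Q div d1}" "q \<in> {0..<Q div d2} \<times> {0..<Q div d1}"
    then show "(\<phi> p = \<phi> q) = (p = q)" using d1 d2 unfolding \<phi>_def by (auto split: prod.splits)
  next
    fix p assume "p \<in> {0..<Q div d2} \<times> {0..<Q div d1}"
    then obtain j i where p: "p = (j, i)" "0 \<le> j" "j < Q div d2" "0 \<le> i" "i < Q div d1" by auto
    have "(cc j mod d1 + d1 * i, d2 * j) \<in> \<Lambda>" using d2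
      by (subst memb) (auto simp: mod_eq_dvd_iff[symmetric] intro!: dvd_add_right_iff[THEN iffD2] dvd_diff)
    moreover have "0 \<le> cc j mod d1 + d1 * i" using d1 p by simp
    moreover have "cc j mod d1 + d1 * i < Q"
    proof -
      have "i + 1 \<le> Q div d1" using p by simp
      then have "d1 * (i + 1) \<le> d1 * (Q div d1)" using d1 by (intro mult_left_mono) auto
      also have "\<dots> = Q" using dQ1 by simp
      finally show ?thesis using pos_mod_bound[OF d1, of "cc j"] by (simp add: algebra_simps)
    qed
    moreover have "0 \<le> d2 * j" using d2 p by simp
    moreover have "d2 * j < Q"
    proof -
      have "j + 1 \<le> Q div d2" using p by simp
      then have "d2 * (j + 1) \<le> d2 * (Q div d2)" using d2 by (intro mult_left_mono) auto
      also have "\<dots> = Q" using dQ2 by simp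
      finally show ?thesis using d2 by (simp add: algebra_simps)
    qed
    ultimately show "\<phi> p \<in> {p\<in>\<Lambda>. fst p \<in> {0..<Q} \<and> snd p \<in> {0..<Q}}" unfolding \<phi>_def p by simp
  next
    fix q assume "q \<in> {p\<in>\<Lambda>. fst p \<in> {0..<Q} \<and> snd p \<in> {0..<Q}}"
    then obtain a b where q: "q = (a, b)" "(a, b) \<in> \<Lambda>" "0 \<le> a" "a < Q" "0 \<le> b" "b < Q"
      by (cases q) auto
    define j where "j = b div d2"
    define i where "i = a div d1"
    have h: "d2 dvd b" "d1 dvd (a - cc j)" using q(2) memb unfolding j_def by auto
    then have b: "b = d2 * j" unfolding j_def by simp
    have "a mod d1 = cc j mod d1" using h(2) by (simp add: mod_eq_dvd_iff)
    then have a: "a = cc j mod d1 + d1 * i" unfolding i_def by (metis mod_div_mult_eq mult.commute add.commute)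
    have "0 \<le> j" using q d2 unfolding j_def by (simp add: pos_imp_zdiv_nonneg_iff)
    moreover have "j < Q div d2"
    proof -
      have "d2 * j < d2 * (Q div d2)" using q(6) b dQ2 by simp
      then show ?thesis using d2 by simp
    qed
    moreover have "0 \<le> i" using q d1 unfolding i_def by (simp add: pos_imp_zdiv_nonneg_iff)
    moreover have "i < Q div d1"
    proof -
      have "d1 * i = a - a mod d1" unfolding i_def by (simp add: minus_mod_eq_mult_div)
      then have "d1 * i \<le> a" using pos_mod_sign[OF d1, of a] by linarith
      also have "a < d1 * (Q div d1)" using q(4) dQ1 by simp
      finally show ?thesis using d1 by simp
    qed
    ultimately show "\<exists>p\<in>{0..<Q div d2} \<times> {0..<Q div d1}. q = \<phi> p"
      unfolding \<phi>_def q using a b by (intro bexI[of _ "(j, i)"]) auto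
  qed
  have "card {p\<in>\<Lambda>. fst p \<in> {0..<Q} \<and> snd p \<in> {0..<Q}} = card ({0..<Q div d2} \<times> {0..<Q div d1})"
    using bij_betw_same_card[OF bij] by simp
  also have "\<dots> = nat (Q div d2) * nat (Q div d1)" by (simp add: card_cartesian_product)
  finally show ?thesis using d1 d2 Q by (simp add: nat_mult_distrib[symmetric] pos_imp_zdiv_nonneg_iff)
qed

lemma cong_helper:
  fixes \<gamma> M G M' \<gamma>' \<mu> a1 s :: int
  assumes "M = G * M'" "\<gamma> = G * \<gamma>'"
  shows "[\<gamma> * ((\<mu> * a1) mod M' + M' * s) = (\<gamma> * \<mu>) * a1] (mod M)"
proof -
  have e: "(\<mu> * a1) mod M' = \<mu> * a1 - M' * ((\<mu> * a1) div M')" using minus_mult_div_eq_mod[of "\<mu> * a1" M'] by simp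
  have r: "\<gamma> * ((\<mu> * a1 - M' * X) + M' * s) - (\<gamma> * \<mu>) * a1 = M * (\<gamma>' * (s - X))" for X
    using assms by (simp add: algebra_simps)
  have "\<gamma> * ((\<mu> * a1) mod M' + M' * s) - (\<gamma> * \<mu>) * a1 = M * (\<gamma>' * (s - (\<mu> * a1) div M'))"
    by (subst e) (rule r)
  then show ?thesis by (simp add: cong_iff_dvd_diff)
qed

lemma mod_plus_mult_eq:
  fixes r s n :: int
  assumes "0 \<le> r" "r < n"
  shows "(r + n * s) mod n = r" "(r + n * s) div n = s"
  using assms by (simp_all add: mod_pos_pos_trivial div_pos_pos_trivial)

lemma rng_lemma:
  fixes M M' G s x :: int
  assumes M': "M' > 0" and MG: "M = G * M'" and that: "0 \<le> s" "s < G"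
  shows "0 \<le> (x mod M') + M' * s \<and> (x mod M') + M' * s < M"
proof -
    have "s + 1 \<le> G" using that by simp
    then have "M' * (s + 1) \<le> M' * G" using M' by (intro mult_left_mono) auto
    moreover have "M' * (s + 1) = M' * s + M'" by (simp add: algebra_simps)
    moreover have "M' * G = M" using MG by (simp add: mult.commute)
    moreover have "x mod M' < M'" "0 \<le> x mod M'" using pos_mod_bound[OF M', of x] pos_mod_sign[OF M', of x] by auto
    moreover have "0 \<le> M' * s" using M' that by simp
    ultimately have "x mod M' + M' * s < M" by linarith
    then show ?thesis using \<open>0 \<le> M' * s\<close> pos_mod_sign[OF M', of x] by simp
qed

lemma div_lt:
  fixes a n G :: int
  assumes n: "0 < n" and a: "a < G * n"
  shows "a div n < G"
proof -
  have "n * (a div n) = a - a mod n" by (simp add: minus_mod_eq_mult_div)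
  then have "n * (a div n) < n * G" using pos_mod_sign[OF n, of a] a by (simp add: mult.commute)
  then show ?thesis using n by simp
qed

lemma box_explicit:
  fixes M \<gamma> a1 b1 :: int and \<Lambda> :: "(int \<times> int) set"
  assumes M: "M > 0" and g: "\<gamma> > 0" and cop: "gcd (gcd a1 b1) M = 1"
    and \<Lambda>_def: "\<Lambda> = {(a,b). \<gamma> dvd a \<and> \<gamma> dvd b \<and> (\<exists>l. [a = l*a1] (mod M) \<and> [b = l*b1] (mod M))}"
  shows "int (card {p\<in>\<Lambda>. fst p \<in> {0..<\<gamma>*M} \<and> snd p \<in> {0..<\<gamma>*M}}) = M * gcd \<gamma> M"
proof -
  define G where "G = gcd \<gamma> M"
  define M' where "M' = M div G"
  define \<gamma>' where "\<gamma>' = \<gamma> div G"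
  have G: "G > 0" unfolding G_def using M by simp
  have MG: "M = G * M'" unfolding M'_def G_def by simp
  have gG: "\<gamma> = G * \<gamma>'" unfolding \<gamma>'_def G_def by simp
  have M': "M' > 0" using M G MG by (simp add: zero_less_mult_iff)
  have copg: "coprime \<gamma>' M'" unfolding \<gamma>'_def M'_def G_def using g by (intro div_gcd_coprime) simp
  have cop0: "coprime (gcd a1 b1) M" using cop by (simp add: coprime_iff_gcd_eq_1)
  have copM': "coprime M' (gcd a1 b1)" using cop0 MG by (metis coprime_commute coprime_mult_right_iff)
  have copG: "coprime G (gcd a1 b1)" using cop0 MG by (metis coprime_commute coprime_mult_right_iff)
  define D where "D = {0..<M'} \<times> ({0..<G} \<times> {0..<G})"
  define \<phi> where "\<phi> = (\<lambda>(\<mu>::int, s::int, t::int). (\<gamma> * ((\<mu> * a1) mod M' + M' * s), \<gamma> * ((\<mu> * b1) mod M' + M' * t)))"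
  define T where "T = {p\<in>\<Lambda>. fst p \<in> {0..<\<gamma>*M} \<and> snd p \<in> {0..<\<gamma>*M}}"
  have rng: "0 \<le> (x mod M') + M' * s \<and> (x mod M') + M' * s < M" if "0 \<le> s" "s < G" for x s
    using rng_lemma[OF M' MG that] .
  have bij: "bij_betw \<phi> D T"
  proof (rule bij_betwI')
    fix p q assume pq: "p \<in> D" "q \<in> D"
    obtain \<mu> s t where p: "p = (\<mu>, s, t)" by (cases p) auto
    obtain \<mu>2 s2 t2 where q: "q = (\<mu>2, s2, t2)" by (cases q) auto
    show "(\<phi> p = \<phi> q) = (p = q)"
    proof
      assume "\<phi> p = \<phi> q"
      then have "\<gamma> * ((\<mu> * a1) mod M' + M' * s) = \<gamma> * ((\<mu>2 * a1) mod M' + M' * s2)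
          \<and> \<gamma> * ((\<mu> * b1) mod M' + M' * t) = \<gamma> * ((\<mu>2 * b1) mod M' + M' * t2)"
        unfolding \<phi>_def p q by simp
      then have e1: "(\<mu> * a1) mod M' + M' * s = (\<mu>2 * a1) mod M' + M' * s2"
        and e2: "(\<mu> * b1) mod M' + M' * t = (\<mu>2 * b1) mod M' + M' * t2"
        using g by simp_all
      have mm: "0 \<le> x mod M'" "x mod M' < M'" for x using M' by simp_all
      have r1: "(\<mu> * a1) mod M' = (\<mu>2 * a1) mod M'" "s = s2"
        using arg_cong[OF e1, of "\<lambda>z. z mod M'"] arg_cong[OF e1, of "\<lambda>z. z div M'"]
        unfolding mod_plus_mult_eq[OF mm] by simp_all
      have r2: "(\<mu> * b1) mod M' = (\<mu>2 * b1) mod M'" "t = t2"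
        using arg_cong[OF e2, of "\<lambda>z. z mod M'"] arg_cong[OF e2, of "\<lambda>z. z div M'"]
        unfolding mod_plus_mult_eq[OF mm] by simp_all
      have f12: "M' dvd (\<mu> - \<mu>2) * a1" "M' dvd (\<mu> - \<mu>2) * b1"
        using r1(1) r2(1) unfolding mod_eq_dvd_iff left_diff_distrib by simp_all
      have "M' dvd \<mu> - \<mu>2" by (rule dvd_from_pair[OF f12 copM'])
      then have "\<mu> mod M' = \<mu>2 mod M'" by (simp add: mod_eq_dvd_iff)
      moreover have "0 \<le> \<mu>" "\<mu> < M'" "0 \<le> \<mu>2" "\<mu>2 < M'" using pq unfolding p q D_def by auto
      ultimately have "\<mu> = \<mu>2" by (simp add: mod_pos_pos_trivial)
      then show "p = q" using r1 r2 p q by simp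
    qed simp
  next
    fix p assume "p \<in> D"
    then obtain \<mu> s t where p: "p = (\<mu>, s, t)" "0 \<le> s" "s < G" "0 \<le> t" "t < G" unfolding D_def by auto
    have "\<phi> p \<in> \<Lambda>" unfolding \<phi>_def p \<Lambda>_def
      using cong_helper[OF MG gG, of \<mu> a1 s] cong_helper[OF MG gG, of \<mu> b1 t] by auto
    moreover have "fst (\<phi> p) \<in> {0..<\<gamma>*M}" "snd (\<phi> p) \<in> {0..<\<gamma>*M}"
      unfolding \<phi>_def p using rng[OF p(2,3), of "\<mu> * a1"] rng[OF p(4,5), of "\<mu> * b1"] g by auto
    ultimately show "\<phi> p \<in> T" unfolding T_def by simp
  next
    fix q assume "q \<in> T"
    then obtain a b where q: "q = (a, b)" "(a,b) \<in> \<Lambda>" "0 \<le> a" "a < \<gamma>*M" "0 \<le> b" "b < \<gamma>*M"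
      unfolding T_def by (cases q) auto
    obtain l where l: "[a = l*a1] (mod M)" "[b = l*b1] (mod M)" and ga: "\<gamma> dvd a" and gb: "\<gamma> dvd b"
      using q(2) unfolding \<Lambda>_def by blast
    obtain a' b' where ab: "a = \<gamma> * a'" "b = \<gamma> * b'" using ga gb by (auto elim!: dvdE)
    have a'r: "0 \<le> a'" "a' < M" using q(3,4) g ab by (simp_all add: zero_le_mult_iff)
    have b'r: "0 \<le> b'" "b' < M" using q(5,6) g ab by (simp_all add: zero_le_mult_iff)
    have dM: "M dvd \<gamma> * a' - l * a1" "M dvd \<gamma> * b' - l * b1" using l ab by (simp_all add: cong_iff_dvd_diff)
    have Ga: "G dvd l * a1"
    proof -
      have "G * M' dvd \<gamma> * a' - l * a1" using dM(1) MG by simp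
      then have h1: "G dvd \<gamma> * a' - l * a1" by (rule dvd_mult_left)
      have h2: "G dvd \<gamma> * a'" using gG by simp
      have "G dvd \<gamma> * a' - (\<gamma> * a' - l * a1)" using dvd_diff[OF h2 h1] .
      then show ?thesis by simp
    qed
    have Gb: "G dvd l * b1"
    proof -
      have "G * M' dvd \<gamma> * b' - l * b1" using dM(2) MG by simp
      then have h1: "G dvd \<gamma> * b' - l * b1" by (rule dvd_mult_left)
      have h2: "G dvd \<gamma> * b'" using gG by simp
      have "G dvd \<gamma> * b' - (\<gamma> * b' - l * b1)" using dvd_diff[OF h2 h1] .
      then show ?thesis by simp
    qed
    have "G dvd l" by (rule dvd_from_pair[OF Ga Gb copG])
    then obtain l' where l': "l = G * l'" by (auto elim: dvdE)
    have c1: "[\<gamma>' * a' = l' * a1] (mod M')"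
    proof -
      have "G * M' dvd G * (\<gamma>' * a' - l' * a1)" using dM(1) MG gG l' by (simp add: algebra_simps)
      then show ?thesis using G by (simp add: cong_iff_dvd_diff)
    qed
    have c2: "[\<gamma>' * b' = l' * b1] (mod M')"
    proof -
      have "G * M' dvd G * (\<gamma>' * b' - l' * b1)" using dM(2) MG gG l' by (simp add: algebra_simps)
      then show ?thesis using G by (simp add: cong_iff_dvd_diff)
    qed
    obtain u where u: "[\<gamma>' * u = 1] (mod M')" using cong_solve_coprime_int[OF copg] by blast
    define \<mu> where "\<mu> = (u * l') mod M'"
    have key: "[x = \<mu> * y] (mod M')" if cx: "[\<gamma>' * x = l' * y] (mod M')" for x y
    proof -
      have "[x = (\<gamma>' * u) * x] (mod M')" using cong_scalar_right[OF u, of x] by (simp add: cong_sym)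
      also have "(\<gamma>' * u) * x = u * (\<gamma>' * x)" by simp
      also have "[u * (\<gamma>' * x) = u * (l' * y)] (mod M')" by (rule cong_scalar_left[OF cx])
      also have "u * (l' * y) = (u * l') * y" by simp
      also have "[(u * l') * y = \<mu> * y] (mod M')" unfolding \<mu>_def
        by (rule cong_scalar_right) (simp add: cong_sym)
      finally show ?thesis .
    qed
    have ka: "a' mod M' = (\<mu> * a1) mod M'" using key[OF c1] by (simp add: cong_def)
    have kb: "b' mod M' = (\<mu> * b1) mod M'" using key[OF c2] by (simp add: cong_def)
    define s where "s = a' div M'"
    define t where "t = b' div M'"
    have sr: "0 \<le> s" "s < G" unfolding s_def using a'r M' MG div_lt[OF M', of a' G]
      by (simp_all add: pos_imp_zdiv_nonneg_iff)
    have tr: "0 \<le> t" "t < G" unfolding t_def using b'r M' MG div_lt[OF M', of b' G]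
      by (simp_all add: pos_imp_zdiv_nonneg_iff)
    have "a' = (\<mu> * a1) mod M' + M' * s" unfolding s_def ka[symmetric] by simp
    moreover have "b' = (\<mu> * b1) mod M' + M' * t" unfolding t_def kb[symmetric] by simp
    moreover have "\<mu> \<in> {0..<M'}" unfolding \<mu>_def using M' by simp
    ultimately show "\<exists>p\<in>D. q = \<phi> p" unfolding D_def \<phi>_def q ab using sr tr
      by (intro bexI[of _ "(\<mu>, s, t)"]) auto
  qed
  have "card T = card D" using bij_betw_same_card[OF bij] by simp
  also have "\<dots> = nat M' * (nat G * nat G)" unfolding D_def by (simp add: card_cartesian_product)
  finally have "int (card T) = M' * G * G" using M' G by simp
  then show ?thesis unfolding T_def G_def[symmetric] using MG by simp
qed

lemma lattice_structure:
  fixes M \<gamma> a1 b1 :: int and \<Lambda> :: "(int \<times> int) set"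
  assumes M: "M > 0" and g: "\<gamma> > 0" and cop: "gcd (gcd a1 b1) M = 1"
    and \<Lambda>_def: "\<Lambda> = {(a,b). \<gamma> dvd a \<and> \<gamma> dvd b \<and> (\<exists>l. [a = l*a1] (mod M) \<and> [b = l*b1] (mod M))}"
  shows "\<exists>d1 d2 cc. d1 > 0 \<and> d2 > 0 \<and> \<gamma> dvd d1 \<and> \<gamma> dvd d2 \<and> d1 * d2 * gcd \<gamma> M = \<gamma>^2 * M
     \<and> (\<forall>a b. (a,b) \<in> \<Lambda> \<longleftrightarrow> d2 dvd b \<and> d1 dvd (a - cc (b div d2)))"
proof -
  have L0: "(0,0) \<in> \<Lambda>" unfolding \<Lambda>_def by (auto intro!: exI[of _ 0])
  have Ls: "(a - a', b - b') \<in> \<Lambda>" if ab12: "(a,b) \<in> \<Lambda>" "(a',b') \<in> \<Lambda>" for a b a' b'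
  proof -
    obtain l where l1: "[a = l*a1] (mod M)" "[b = l*b1] (mod M)"
      using ab12(1) unfolding \<Lambda>_def by blast
    obtain l' where l2: "[a' = l'*a1] (mod M)" "[b' = l'*b1] (mod M)"
      using ab12(2) unfolding \<Lambda>_def by blast
    note l = l1 l2
    have "[a - a' = (l - l')*a1] (mod M)" "[b - b' = (l - l')*b1] (mod M)"
      using cong_diff[OF l(1) l(3)] cong_diff[OF l(2) l(4)] by (simp_all add: algebra_simps)
    then show ?thesis using ab12 unfolding \<Lambda>_def by auto
  qed
  define Q where "Q = \<gamma> * M"
  have Q: "Q > 0" using M g unfolding Q_def by simp
  have LQ1: "(Q, 0) \<in> \<Lambda>" unfolding \<Lambda>_def Q_def by (auto intro!: exI[of _ 0] simp: cong_0_iff)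
  have LQ2: "(0, Q) \<in> \<Lambda>" unfolding \<Lambda>_def Q_def by (auto intro!: exI[of _ 0] simp: cong_0_iff)
  obtain d1 where d1: "d1 > 0" "\<And>x. (x, 0) \<in> \<Lambda> \<longleftrightarrow> d1 dvd x"
    using int_subgroup[of "{x. (x,0) \<in> \<Lambda>}" Q] L0 LQ1 Q Ls[of _ 0 _ 0] by auto
  obtain d2 where d2: "d2 > 0" "\<And>y. (\<exists>x. (x, y) \<in> \<Lambda>) \<longleftrightarrow> d2 dvd y"
  proof -
    have "\<exists>e>0. \<forall>y. y \<in> {y. \<exists>x. (x, y) \<in> \<Lambda>} \<longleftrightarrow> e dvd y"
    proof (rule int_subgroup[of _ Q])
      show "0 \<in> {y. \<exists>x. (x, y) \<in> \<Lambda>}" using L0 by auto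
      show "Q \<in> {y. \<exists>x. (x, y) \<in> \<Lambda>}" using LQ2 by auto
      show "Q > 0" by (rule Q)
      fix x y assume "x \<in> {y. \<exists>x. (x, y) \<in> \<Lambda>}" "y \<in> {y. \<exists>x. (x, y) \<in> \<Lambda>}"
      then show "x - y \<in> {y. \<exists>x. (x, y) \<in> \<Lambda>}" using Ls by blast
    qed
    then show ?thesis using that by auto
  qed
  define cc where "cc j = (SOME a. (a, d2 * j) \<in> \<Lambda>)" for j
  have cc: "(cc j, d2 * j) \<in> \<Lambda>" for j
    unfolding cc_def by (rule someI_ex) (use d2(2) in auto)
  have Lneg: "(a,b) \<in> \<Lambda> \<Longrightarrow> (-a,-b) \<in> \<Lambda>" for a b using Ls[OF L0, of a b] by simp
  have Ladd: "(a,b) \<in> \<Lambda> \<Longrightarrow> (a',b') \<in> \<Lambda> \<Longrightarrow> (a + a', b + b') \<in> \<Lambda>" for a b a' b'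
    using Ls[OF _ Lneg, of a b a' b'] by simp
  have memb: "(a,b) \<in> \<Lambda> \<longleftrightarrow> d2 dvd b \<and> d1 dvd (a - cc (b div d2))" for a b
  proof
    assume ab: "(a,b) \<in> \<Lambda>"
    then have "d2 dvd b" using d2(2) by auto
    then have "b = d2 * (b div d2)" by simp
    then have "(a - cc (b div d2), 0) \<in> \<Lambda>" using Ls[OF ab cc[of "b div d2"]] by simp
    then show "d2 dvd b \<and> d1 dvd (a - cc (b div d2))" using d1(2) \<open>d2 dvd b\<close> by auto
  next
    assume h: "d2 dvd b \<and> d1 dvd (a - cc (b div d2))"
    then have "b = d2 * (b div d2)" by simp
    moreover have "(a - cc (b div d2), 0) \<in> \<Lambda>" using h d1(2) by auto
    ultimately show "(a,b) \<in> \<Lambda>" using Ladd[OF _ cc[of "b div d2"]] by fastforce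
  qed
  have gd1: "\<gamma> dvd d1" using d1(2)[of d1] unfolding \<Lambda>_def by auto
  have gd2: "\<gamma> dvd d2" using d2(2)[of d2] unfolding \<Lambda>_def by auto
  have dQ1: "d1 dvd Q" using d1(2) LQ1 by simp
  have dQ2: "d2 dvd Q" using d2(2) LQ2 by auto
  have e1: "int (card {p\<in>\<Lambda>. fst p \<in> {0..<Q} \<and> snd p \<in> {0..<Q}}) = (Q div d1) * (Q div d2)"
    by (rule box_struct[OF d1(1) d2(1) dQ1 dQ2 Q memb])
  have e2: "int (card {p\<in>\<Lambda>. fst p \<in> {0..<Q} \<and> snd p \<in> {0..<Q}}) = M * gcd \<gamma> M"
    unfolding Q_def by (rule box_explicit[OF M g cop \<Lambda>_def])
  have "Q * Q = (d1 * (Q div d1)) * (d2 * (Q div d2))" using dQ1 dQ2 by simp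
  also have "\<dots> = d1 * d2 * ((Q div d1) * (Q div d2))" by (simp add: algebra_simps)
  also have "\<dots> = d1 * d2 * (M * gcd \<gamma> M)" using e1 e2 by simp
  finally have "M * (\<gamma>^2 * M) = M * (d1 * d2 * gcd \<gamma> M)" unfolding Q_def by (simp add: algebra_simps power2_eq_square)
  then have index: "d1 * d2 * gcd \<gamma> M = \<gamma>^2 * M" using M by simp
  show ?thesis using d1(1) d2(1) gd1 gd2 index memb by blast
qed

lemma frontier_poly_sublevel:
  fixes q :: "real poly" and \<alpha> :: real
  shows "finite (frontier {x. \<bar>poly q x\<bar> \<le> \<alpha>}) \<and> card (frontier {x. \<bar>poly q x\<bar> \<le> \<alpha>}) \<le> 2 * degree q"
proof (cases "degree q = 0")
  case True
  then obtain c where q: "q = [:c:]" by (metis degree_eq_zeroE)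
  then have "{x. \<bar>poly q x\<bar> \<le> \<alpha>} = UNIV \<or> {x. \<bar>poly q x\<bar> \<le> \<alpha>} = {}" by auto
  then have "frontier {x. \<bar>poly q x\<bar> \<le> \<alpha>} = {}" by auto
  then show ?thesis by simp
next
  case False
  define P where "P = {x. \<bar>poly q x\<bar> \<le> \<alpha>}"
  define r where "r = q * q + [:- (\<alpha>^2):]"
  have dqq: "degree (q * q) = 2 * degree q" using False by (subst degree_mult_eq) auto
  have dr: "degree r = 2 * degree q" unfolding r_def using False dqq
    by (subst degree_add_eq_left) auto
  then have r0: "r \<noteq> 0" using False by auto
  have cP: "closed P" unfolding P_def by (intro closed_Collect_le continuous_intros)
  have oP: "open {x. \<bar>poly q x\<bar> < \<alpha>}" by (intro open_Collect_less continuous_intros)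
  have iP: "{x. \<bar>poly q x\<bar> < \<alpha>} \<subseteq> interior P"
    by (rule interior_maximal[OF _ oP]) (auto simp: P_def)
  have sub: "frontier P \<subseteq> {x. poly r x = 0}"
  proof
    fix x assume "x \<in> frontier P"
    then have "x \<in> P" "x \<notin> interior P" using cP unfolding frontier_def by auto
    then have "\<bar>poly q x\<bar> = \<alpha>" using iP unfolding P_def by force
    then have "(poly q x)^2 = \<alpha>^2" by (metis power2_abs)
    then show "x \<in> {x. poly r x = 0}" unfolding r_def by (simp add: power2_eq_square)
  qed
  have fin: "finite (frontier P)" using finite_subset[OF sub poly_roots_finite[OF r0]] .
  have "card (frontier P) \<le> card {x. poly r x = 0}" by (rule card_mono[OF poly_roots_finite[OF r0] sub])
  also have "\<dots> \<le> degree r" by (rule card_poly_roots_bound[OF r0])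
  finally show ?thesis using fin dr unfolding P_def by simp
qed


lemma frontier_Int_bound:
  fixes A B :: "real set"
  assumes "finite (frontier A) \<and> card (frontier A) \<le> a" "finite (frontier B) \<and> card (frontier B) \<le> b"
  shows "finite (frontier (A \<inter> B)) \<and> card (frontier (A \<inter> B)) \<le> a + b"
proof -
  have sub: "frontier (A \<inter> B) \<subseteq> frontier A \<union> frontier B" by (auto simp: frontier_Int)
  have fin: "finite (frontier A \<union> frontier B)" using assms by simp
  have "card (frontier (A \<inter> B)) \<le> card (frontier A \<union> frontier B)" by (rule card_mono[OF fin sub])
  also have "\<dots> \<le> card (frontier A) + card (frontier B)" by (rule card_Un_le)
  finally show ?thesis using assms finite_subset[OF sub fin] by simp
qed

lemma hom_form_row_poly:
  assumes "degree p \<le> d"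
  shows "\<exists>q::real poly. degree q \<le> d \<and> (\<forall>x. poly q x = hom_form d p x y)"
proof (intro exI conjI allI)
  let ?q = "\<Sum>i\<le>degree p. monom (real_of_int (coeff p i) * y^(d-i)) i"
  show "degree ?q \<le> d"
    by (rule degree_sum_le) (use assms in \<open>auto intro: order.trans[OF degree_monom_le]\<close>)
  fix x show "poly ?q x = hom_form d p x y"
    unfolding hom_form_def by (simp add: poly_sum poly_monom algebra_simps)
qed

lemma hom_form_col_poly:
  assumes "degree p \<le> d"
  shows "\<exists>q::real poly. degree q \<le> d \<and> (\<forall>y. poly q y = hom_form d p x y)"
proof (intro exI conjI allI)
  let ?q = "\<Sum>i\<le>degree p. monom (real_of_int (coeff p i) * x^i) (d - i)"
  show "degree ?q \<le> d"
    by (rule degree_sum_le) (use assms in \<open>auto intro: order.trans[OF degree_monom_le]\<close>)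
  fix y show "poly ?q y = hom_form d p x y"
    unfolding hom_form_def by (simp add: poly_sum poly_monom algebra_simps)
qed

lemma hom_form_scale:
  assumes "degree p \<le> d"
  shows "hom_form d p (t * x) (t * y) = t ^ d * hom_form d p x y"
  unfolding hom_form_def sum_distrib_left
proof (rule sum.cong[OF refl])
  fix i assume "i \<in> {..degree p}"
  then have "i + (d - i) = d" using assms by simp
  then have "t ^ i * t ^ (d - i) = t ^ d" by (metis power_add)
  then show "real_of_int (coeff p i) * (t * x) ^ i * (t * y) ^ (d - i) = t ^ d * (real_of_int (coeff p i) * x ^ i * y ^ (d - i))"
    by (simp add: power_mult_distrib algebra_simps)
qed

lemma hom_form_y0:
  assumes "degree p \<le> d"
  shows "hom_form d p x 0 = real_of_int (coeff p d) * x ^ d"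
proof (cases "degree p = d")
  case True
  have "hom_form d p x 0 = (\<Sum>i\<le>degree p. if i = d then real_of_int (coeff p i) * x ^ i else 0)"
    unfolding hom_form_def using assms by (intro sum.cong) (auto simp: power_0_left)
  also have "\<dots> = real_of_int (coeff p d) * x ^ d" using True by (simp add: sum.delta)
  finally show ?thesis .
next
  case False
  then have "degree p < d" using assms by simp
  then have "coeff p d = 0" by (simp add: coeff_eq_0)
  moreover have "hom_form d p x 0 = 0"
    unfolding hom_form_def using \<open>degree p < d\<close> by (intro sum.neutral) (auto simp: power_0_left)
  ultimately show ?thesis by simp
qed

lemma hom_form_div:
  assumes "degree p \<le> d" "y \<noteq> 0"
  shows "hom_form d p x y = y ^ d * poly (map_poly real_of_int p) (x / y)"
proof -
  have "poly (map_poly real_of_int p) (x / y) = (\<Sum>i\<le>degree p. real_of_int (coeff p i) * (x / y) ^ i)"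
    by (simp add: poly_altdef degree_map_poly coeff_map_poly)
  then have "y ^ d * poly (map_poly real_of_int p) (x / y) = (\<Sum>i\<le>degree p. real_of_int (coeff p i) * x ^ i * y ^ (d - i))"
    unfolding sum_distrib_left
  proof (simp only: sum_distrib_left, intro sum.cong refl)
    fix i assume "i \<in> {..degree p}"
    then have "d = i + (d - i)" using assms by simp
    then have "y ^ d = y ^ i * y ^ (d - i)" by (metis power_add)
    then show "y ^ d * (real_of_int (coeff p i) * (x / y) ^ i) = real_of_int (coeff p i) * x ^ i * y ^ (d - i)"
      using assms(2) by (simp add: power_divide field_simps)
  qed
  then show ?thesis unfolding hom_form_def by simp
qed

lemma hom_form_cont: "continuous_on UNIV (\<lambda>z::real\<times>real. hom_form d p (fst z) (snd z))"
  unfolding hom_form_def by (intro continuous_intros)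


lemma powr_split:
  fixes N c a :: real
  assumes "N > 0" "c > 0"
  shows "(N / c) powr a = N powr a * ((1 / c) powr a)"
  using assms by (simp add: powr_divide)

lemma T_pow:
  fixes N :: real and m k :: nat
  assumes "N > 0" "m > 0"
  shows "(N powr (1 / (12 * real m))) ^ (k * m) = N powr (real k / 12)"
proof -
  have "(N powr (1 / (12 * real m))) ^ (k * m) = (N powr (1 / (12 * real m))) powr real (k * m)"
    using assms by (simp only: powr_realpow powr_gt_zero) 
  also have "\<dots> = N powr (1 / (12 * real m) * real (k * m))" by (simp add: powr_powr)
  also have "1 / (12 * real m) * real (k * m) = real k / 12" using assms by (simp add: field_simps)
  finally show ?thesis .
qed

lemma region_scale:
  fixes f g :: "int poly" and m :: nat and N x y :: real
  assumes df: "degree f \<le> 4 * m" and dg: "degree g \<le> 6 * m" and m: "m > 0" and N: "N > 0"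
  defines "T \<equiv> N powr (1 / (12 * real m))"
  shows "(x, y) \<in> region f g m N \<longleftrightarrow> (x / T, y / T) \<in> region f g m 1"
proof -
  have T: "T > 0" unfolding T_def using N by simp
  have T4: "T ^ (4 * m) = N powr (1/3)" unfolding T_def using T_pow[OF N m, of 4] by simp
  have T6: "T ^ (6 * m) = N powr (1/2)" unfolding T_def using T_pow[OF N m, of 6] by simp
  have hA: "hom_form (4*m) f x y = T ^ (4 * m) * hom_form (4*m) f (x / T) (y / T)"
    using hom_form_scale[OF df, of T "x / T" "y / T"] T by simp
  have hB: "hom_form (6*m) g x y = T ^ (6 * m) * hom_form (6*m) g (x / T) (y / T)"
    using hom_form_scale[OF dg, of T "x / T" "y / T"] T by simp
  have a: "(N / 4) powr (1/3) = N powr (1/3) * ((1/4) powr (1/3))" by (rule powr_split) (use N in auto)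
  have b: "(N / 27) powr (1/2) = N powr (1/2) * ((1/27) powr (1/2))" by (rule powr_split) (use N in auto)
  have pA: "N powr (1/3) > 0" "N powr (1/2) > 0" using N by auto
  show ?thesis unfolding region_def using pA
    by (simp add: hA hB T4 T6 a b abs_mult mult_le_cancel_left_pos)
qed


lemma region_bounded:
  fixes f g :: "int poly" and m :: nat
  assumes m: "m > 0" and df: "degree f \<le> 4 * m" and dg: "degree g \<le> 6 * m"
    and dor: "degree f = 4 * m \<or> degree g = 6 * m"
    and ncr: "\<not> (\<exists>t::real. poly (map_poly real_of_int f) t = 0 \<and> poly (map_poly real_of_int g) t = 0)"
  shows "\<exists>K\<ge>1. \<forall>x y. (x, y) \<in> region f g m 1 \<longrightarrow> \<bar>x\<bar> \<le> K \<and> \<bar>y\<bar> \<le> K"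
proof -
  define A where "A z = hom_form (4*m) f (fst z) (snd z)" for z :: "real \<times> real"
  define B where "B z = hom_form (6*m) g (fst z) (snd z)" for z :: "real \<times> real"
  define \<phi> where "\<phi> z = \<bar>A z\<bar> + \<bar>B z\<bar>" for z
  have pos: "\<phi> z > 0" if "z \<noteq> 0" for z
  proof (rule ccontr)
    assume "\<not> \<phi> z > 0"
    then have A0: "A z = 0" and B0: "B z = 0" unfolding \<phi>_def by auto
    obtain x y where z: "z = (x, y)" by (cases z)
    show False
    proof (cases "y = 0")
      case False
      have "y ^ (4*m) * poly (map_poly real_of_int f) (x / y) = 0"
        using A0 hom_form_div[OF df False, of x] unfolding A_def z by simp
      then have "poly (map_poly real_of_int f) (x / y) = 0" using False by simp
      moreover have "y ^ (6*m) * poly (map_poly real_of_int g) (x / y) = 0"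
        using B0 hom_form_div[OF dg False, of x] unfolding B_def z by simp
      then have "poly (map_poly real_of_int g) (x / y) = 0" using False by simp
      ultimately show False using ncr by blast
    next
      case True
      then have x0: "x \<noteq> 0" using that z by (auto simp: zero_prod_def)
      have "real_of_int (coeff f (4*m)) * x ^ (4*m) = 0"
        using A0 hom_form_y0[OF df, of x] unfolding A_def z True by simp
      then have cf: "coeff f (4*m) = 0" using x0 by simp
      have "real_of_int (coeff g (6*m)) * x ^ (6*m) = 0"
        using B0 hom_form_y0[OF dg, of x] unfolding B_def z True by simp
      then have cg: "coeff g (6*m) = 0" using x0 by simp
      show False
      proof (cases "degree f = 4 * m")
        case True
        then have "f = 0" using cf by (metis leading_coeff_0_iff)
        then show False using True m by simp
      next
        case False
        then have dg6: "degree g = 6 * m" using dor by simp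
        then have "g = 0" using cg by (metis leading_coeff_0_iff)
        then show False using dg6 m by simp
      qed
    qed
  qed
  have cont: "continuous_on UNIV \<phi>"
    unfolding \<phi>_def A_def B_def by (intro continuous_intros hom_form_cont)
  have ne: "sphere (0::real\<times>real) 1 \<noteq> {}"
  proof -
    have "(1::real, 0::real) \<in> sphere 0 1" by (simp add: zero_prod_def dist_Pair_Pair)
    then show ?thesis by blast
  qed
  have "\<exists>x\<in>sphere (0::real\<times>real) 1. \<forall>y\<in>sphere 0 1. \<phi> x \<le> \<phi> y"
    by (rule continuous_attains_inf[OF compact_sphere ne continuous_on_subset[OF cont]]) simp
  then obtain u0 where u0: "u0 \<in> sphere (0::real\<times>real) 1" "\<And>u. u \<in> sphere 0 1 \<Longrightarrow> \<phi> u0 \<le> \<phi> u"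
    by blast
  define \<mu> where "\<mu> = \<phi> u0"
  have \<mu>: "\<mu> > 0" unfolding \<mu>_def using u0(1) by (intro pos) auto
  define K where "K = max 1 (2 / \<mu>)"
  have "\<forall>x y. (x, y) \<in> region f g m 1 \<longrightarrow> \<bar>x\<bar> \<le> K \<and> \<bar>y\<bar> \<le> K"
  proof (intro allI impI)
    fix x y assume xy: "(x, y) \<in> region f g m 1"
    define r where "r = norm (x, y)"
    have nx: "\<bar>x\<bar> \<le> r" "\<bar>y\<bar> \<le> r" unfolding r_def using norm_fst_le[of x y] norm_snd_le[of y x] by auto
    have "r \<le> K"
    proof (cases "r \<le> 1")
      case True then show ?thesis unfolding K_def by simp
    next
      case False
      then have r1: "r > 1" by simp
      define u where "u = (x / r, y / r)"
      have "norm u = norm ((1 / r) *\<^sub>R (x, y))" unfolding u_def by simp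
      also have "\<dots> = \<bar>1 / r\<bar> * norm (x, y)" by (rule norm_scaleR)
      also have "\<dots> = 1" using r1 unfolding r_def[symmetric] by simp
      finally have "u \<in> sphere 0 1" by simp
      then have mu: "\<mu> \<le> \<bar>A u\<bar> + \<bar>B u\<bar>" using u0(2) unfolding \<mu>_def \<phi>_def by blast
      have Az: "hom_form (4*m) f x y = r ^ (4*m) * A u"
        using hom_form_scale[OF df, of r "x / r" "y / r"] r1 unfolding A_def u_def by simp
      have Bz: "hom_form (6*m) g x y = r ^ (6*m) * B u"
        using hom_form_scale[OF dg, of r "x / r" "y / r"] r1 unfolding B_def u_def by simp
      have bA: "\<bar>hom_form (4*m) f x y\<bar> \<le> 1"
      proof -
        have "\<bar>hom_form (4*m) f x y\<bar> \<le> (1/4) powr (1/3)" using xy unfolding region_def by simp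
        also have "\<dots> \<le> 1" by (rule powr_le1) auto
        finally show ?thesis .
      qed
      have bB: "\<bar>hom_form (6*m) g x y\<bar> \<le> 1"
      proof -
        have "\<bar>hom_form (6*m) g x y\<bar> \<le> (1/27) powr (1/2)" using xy unfolding region_def by simp
        also have "\<dots> \<le> 1" by (rule powr_le1) auto
        finally show ?thesis .
      qed
      have p46: "r ^ (4*m) \<le> r ^ (6*m)" using r1 by (intro power_increasing) auto
      have p1: "r \<le> r ^ (4*m)" using r1 m power_increasing[of 1 "4*m" r] by simp
      have "r ^ (4*m) * \<mu> \<le> r ^ (4*m) * \<bar>A u\<bar> + r ^ (4*m) * \<bar>B u\<bar>"
        using mu r1 by (simp add: distrib_left[symmetric])
      also have "\<dots> \<le> r ^ (4*m) * \<bar>A u\<bar> + r ^ (6*m) * \<bar>B u\<bar>"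
        using p46 by (intro add_left_mono mult_right_mono) auto
      also have "\<dots> = \<bar>hom_form (4*m) f x y\<bar> + \<bar>hom_form (6*m) g x y\<bar>"
        using r1 by (simp add: Az Bz abs_mult)
      also have "\<dots> \<le> 2" using bA bB by simp
      finally have "r ^ (4*m) * \<mu> \<le> 2" .
      then have "r * \<mu> \<le> 2" using p1 \<mu> by (meson mult_right_mono less_imp_le order_trans)
      then have "r \<le> 2 / \<mu>" using \<mu> by (simp add: field_simps)
      then show ?thesis unfolding K_def by simp
    qed
    then show "\<bar>x\<bar> \<le> K \<and> \<bar>y\<bar> \<le> K" using nx by simp
  qed
  moreover have "K \<ge> 1" unfolding K_def by simp
  ultimately show ?thesis by blast
qed

lemma region_closed: "closed (region f g m N)"
proof -
  have "region f g m N = {z. \<bar>hom_form (4*m) f (fst z) (snd z)\<bar> \<le> (N / 4) powr (1/3)}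
      \<inter> {z. \<bar>hom_form (6*m) g (fst z) (snd z)\<bar> \<le> (N / 27) powr (1/2)}"
    unfolding region_def by auto
  also have "closed \<dots>"
    by (intro closed_Int closed_Collect_le continuous_intros hom_form_cont)
  finally show ?thesis .
qed

lemma region_rows:
  assumes df: "degree f \<le> 4 * m" and dg: "degree g \<le> 6 * m"
  shows "finite (frontier {x. (x, y) \<in> region f g m N}) \<and> card (frontier {x. (x, y) \<in> region f g m N}) \<le> 20 * m"
proof -
  obtain q1 where q1: "degree q1 \<le> 4 * m" "\<And>x. poly q1 x = hom_form (4*m) f x y"
    using hom_form_row_poly[OF df, of y] by blast
  obtain q2 where q2: "degree q2 \<le> 6 * m" "\<And>x. poly q2 x = hom_form (6*m) g x y"
    using hom_form_row_poly[OF dg, of y] by blast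
  have eq: "{x. (x, y) \<in> region f g m N} = {x. \<bar>poly q1 x\<bar> \<le> (N / 4) powr (1/3)} \<inter> {x. \<bar>poly q2 x\<bar> \<le> (N / 27) powr (1/2)}"
    unfolding region_def q1(2) q2(2) by auto
  have a: "finite (frontier {x. \<bar>poly q1 x\<bar> \<le> (N / 4) powr (1/3)}) \<and> card (frontier {x. \<bar>poly q1 x\<bar> \<le> (N / 4) powr (1/3)}) \<le> 8 * m"
    using frontier_poly_sublevel[of q1 "(N / 4) powr (1/3)"] q1(1) by auto
  have b: "finite (frontier {x. \<bar>poly q2 x\<bar> \<le> (N / 27) powr (1/2)}) \<and> card (frontier {x. \<bar>poly q2 x\<bar> \<le> (N / 27) powr (1/2)}) \<le> 12 * m"
    using frontier_poly_sublevel[of q2 "(N / 27) powr (1/2)"] q2(1) by auto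
  show ?thesis unfolding eq using frontier_Int_bound[OF a b] by simp
qed

lemma region_cols:
  assumes df: "degree f \<le> 4 * m" and dg: "degree g \<le> 6 * m"
  shows "finite (frontier {y. (x, y) \<in> region f g m N}) \<and> card (frontier {y. (x, y) \<in> region f g m N}) \<le> 20 * m"
proof -
  obtain q1 where q1: "degree q1 \<le> 4 * m" "\<And>y. poly q1 y = hom_form (4*m) f x y"
    using hom_form_col_poly[OF df, of x] by blast
  obtain q2 where q2: "degree q2 \<le> 6 * m" "\<And>y. poly q2 y = hom_form (6*m) g x y"
    using hom_form_col_poly[OF dg, of x] by blast
  have eq: "{y. (x, y) \<in> region f g m N} = {y. \<bar>poly q1 y\<bar> \<le> (N / 4) powr (1/3)} \<inter> {y. \<bar>poly q2 y\<bar> \<le> (N / 27) powr (1/2)}"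
    unfolding region_def q1(2) q2(2) by auto
  have a: "finite (frontier {y. \<bar>poly q1 y\<bar> \<le> (N / 4) powr (1/3)}) \<and> card (frontier {y. \<bar>poly q1 y\<bar> \<le> (N / 4) powr (1/3)}) \<le> 8 * m"
    using frontier_poly_sublevel[of q1 "(N / 4) powr (1/3)"] q1(1) by auto
  have b: "finite (frontier {y. \<bar>poly q2 y\<bar> \<le> (N / 27) powr (1/2)}) \<and> card (frontier {y. \<bar>poly q2 y\<bar> \<le> (N / 27) powr (1/2)}) \<le> 12 * m"
    using frontier_poly_sublevel[of q2 "(N / 27) powr (1/2)"] q2(1) by auto
  show ?thesis unfolding eq using frontier_Int_bound[OF a b] by simp
qed

lemma region_measure:
  fixes f g :: "int poly" and m :: nat and N :: real
  assumes df: "degree f \<le> 4 * m" and dg: "degree g \<le> 6 * m" and m: "m > 0" and N: "N > 0"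
  shows "measure lborel (region f g m N) = (N powr (1 / (12 * real m)))^2 * measure lborel (region f g m 1)"
proof -
  define T where "T = N powr (1 / (12 * real m))"
  have T: "T > 0" unfolding T_def using N by simp
  have img: "region f g m N = (\<lambda>z. T *\<^sub>R z + 0) ` region f g m 1"
  proof (intro set_eqI iffI)
    fix z assume "z \<in> region f g m N"
    moreover obtain x y where z: "z = (x, y)" by (cases z)
    ultimately have "(x / T, y / T) \<in> region f g m 1" using region_scale[OF df dg m N] unfolding T_def by blast
    moreover have "z = T *\<^sub>R (x / T, y / T) + 0" using T z by simp
    ultimately show "z \<in> (\<lambda>z. T *\<^sub>R z + 0) ` region f g m 1" by blast
  next
    fix z assume "z \<in> (\<lambda>z. T *\<^sub>R z + 0) ` region f g m 1"
    then obtain x y where xy: "(x, y) \<in> region f g m 1" "z = T *\<^sub>R (x, y)" by auto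
    have "(T * x / T, T * y / T) \<in> region f g m 1" using xy T by simp
    then show "z \<in> region f g m N" using region_scale[OF df dg m N, of "T * x" "T * y"] xy(2) unfolding T_def by simp
  qed
  have bN: "region f g m N \<in> sets borel" using region_closed by simp
  have b1: "region f g m 1 \<in> sets borel" using region_closed by simp
  have "measure lborel (region f g m N) = measure lebesgue (region f g m N)"
    using bN by (simp add: measure_completion)
  also have "\<dots> = \<bar>T\<bar> ^ DIM(real \<times> real) * measure lebesgue (region f g m 1)"
    unfolding img by (rule measure_lebesgue_affine)
  also have "measure lebesgue (region f g m 1) = measure lborel (region f g m 1)"
    using b1 by (simp add: measure_completion)
  finally show ?thesis unfolding T_def using T by (simp add: T_def power2_eq_square)
qed


theorem lemma4p4:
  fixes f g :: "int poly" and m :: nat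
  assumes m_pos: "m > 0"
    and disc: "smult 4 (f ^ 3) + smult 27 (g ^ 2) \<noteq> 0"
    and no_common_root: "\<not> (\<exists>t::real. poly (map_poly real_of_int f) t = 0 \<and> poly (map_poly real_of_int g) t = 0)"
    and deg: "max (real (degree f) / 2) (real (degree g) / 3) = 2 * real m"
  shows "\<exists>C c::real. c > 0 \<and>
    (\<forall>M \<gamma> a1 b1 :: int. \<forall>N::real.
       M > 0 \<longrightarrow> \<gamma> > 0 \<longrightarrow> squarefree \<gamma> \<longrightarrow> gcd (gcd a1 b1) M = 1 \<longrightarrow> N \<ge> 1 \<longrightarrow>
       \<bar>real (card (count_set f g m N \<gamma> M a1 b1))
          - N powr (1 / (6 * real m)) * measure lborel (region f g m 1) * real_of_int (gcd \<gamma> M)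
              / (real_of_int \<gamma> ^ 2 * real_of_int M)\<bar>
         \<le> C * N powr (1 / (12 * real m)) / real_of_int \<gamma>
       \<and> (real_of_int \<gamma> > c * N powr (1 / (12 * real m)) \<longrightarrow> count_set f g m N \<gamma> M a1 b1 = {}))"
proof -
  have dd: "real (degree f) / 2 \<le> 2 * real m" "real (degree g) / 3 \<le> 2 * real m"
    using deg by (metis max.cobounded1, metis max.cobounded2)
  have df: "degree f \<le> 4 * m"
  proof -
    have "real (degree f) \<le> real (4 * m)" using dd(1) by simp
    then show ?thesis by linarith
  qed
  have dg: "degree g \<le> 6 * m"
  proof -
    have "real (degree g) \<le> real (6 * m)" using dd(2) by simp
    then show ?thesis by linarith
  qed
  have dor: "degree f = 4 * m \<or> degree g = 6 * m"
  proof (cases "real (degree f) / 2 \<le> real (degree g) / 3")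
    case True
    then have "real (degree g) / 3 = 2 * real m" using deg by (simp add: max_def)
    then have "real (degree g) = real (6 * m)" by simp
    then show ?thesis by linarith
  next
    case False
    then have "real (degree f) / 2 = 2 * real m" using deg by (simp add: max_def)
    then have "real (degree f) = real (4 * m)" by simp
    then show ?thesis by linarith
  qed
  obtain K where K1: "K \<ge> 1" and Kb: "\<And>x y. (x, y) \<in> region f g m 1 \<Longrightarrow> \<bar>x\<bar> \<le> K \<and> \<bar>y\<bar> \<le> K"
    using region_bounded[OF m_pos df dg dor no_common_root] by blast
  define k :: nat where "k = 20 * m"
  define V where "V = measure lborel (region f g m 1)"
  have V0: "V \<ge> 0" unfolding V_def by simp
  define C where "C = (5 * real k + 1) * K + V"
  have CV: "C \<ge> V" unfolding C_def using K1 by simp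
  have CK: "C \<ge> (5 * real k + 1) * K" unfolding C_def using V0 by simp
  show ?thesis
  proof (rule exI[of _ C], rule exI[of _ K], intro conjI allI impI)
    show "K > 0" using K1 by simp
  next
    fix M \<gamma> a1 b1 :: int and N :: real
    assume M: "M > 0" and g: "\<gamma> > 0" and sqf: "squarefree \<gamma>" and cop: "gcd (gcd a1 b1) M = 1" and N1: "N \<ge> 1"
    have N: "N > 0" using N1 by simp
    define T where "T = N powr (1 / (12 * real m))"
    have T: "T > 0" unfolding T_def using N by simp
    have T2: "N powr (1 / (6 * real m)) = T ^ 2"
    proof -
      have "T ^ 2 = T powr (real 2)" using T by (simp only: powr_realpow)
      also have "\<dots> = N powr (1 / (12 * real m) * 2)" unfolding T_def by (simp add: powr_powr)
      also have "1 / (12 * real m) * 2 = 1 / (6 * real m)" by simp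
      finally show ?thesis by simp
    qed
    define S where "S = region f g m N"
    have Sbox: "S \<subseteq> {-(K*T)..K*T} \<times> {-(K*T)..K*T}"
    proof
      fix z assume "z \<in> S"
      moreover obtain x y where z: "z = (x, y)" by (cases z)
      ultimately have "(x / T, y / T) \<in> region f g m 1"
        using region_scale[OF df dg m_pos N] unfolding S_def T_def by blast
      then have "\<bar>x / T\<bar> \<le> K" "\<bar>y / T\<bar> \<le> K" using Kb by blast+
      then have "\<bar>x\<bar> \<le> K * T" "\<bar>y\<bar> \<le> K * T" using T by (simp_all add: abs_divide field_simps)
      then show "z \<in> {-(K*T)..K*T} \<times> {-(K*T)..K*T}" unfolding z by auto
    qed
    define \<Lambda> where "\<Lambda> = {(a::int,b::int). \<gamma> dvd a \<and> \<gamma> dvd b \<and> (\<exists>l. [a = l*a1] (mod M) \<and> [b = l*b1] (mod M))}"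
    obtain d1 d2 cc where d1: "d1 > 0" and d2: "d2 > 0" and gd1: "\<gamma> dvd d1" and gd2: "\<gamma> dvd d2"
      and idx: "d1 * d2 * gcd \<gamma> M = \<gamma>^2 * M"
      and memb: "\<And>a b. (a,b) \<in> \<Lambda> \<longleftrightarrow> d2 dvd b \<and> d1 dvd (a - cc (b div d2))"
      using lattice_structure[OF M g cop \<Lambda>_def] by blast
    have d1g: "real_of_int d1 \<ge> real_of_int \<gamma>" using zdvd_imp_le[OF gd1 d1] by simp
    have d2g: "real_of_int d2 \<ge> real_of_int \<gamma>" using zdvd_imp_le[OF gd2 d2] by simp
    define P where "P = {p\<in>\<Lambda>. (real_of_int (fst p), real_of_int (snd p)) \<in> S}"
    have cs: "count_set f g m N \<gamma> M a1 b1 = P - {(0,0)}"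
      unfolding count_set_def P_def \<Lambda>_def S_def by auto
    have z0: "hom_form d p 0 0 = 0" if "degree p \<le> d" "d > 0" for d p
      using hom_form_scale[OF that(1), of 0 0 0] that(2) by (simp add: power_0_left)
    have P0: "(0,0) \<in> P"
    proof -
      have "(0::int, 0::int) \<in> \<Lambda>" unfolding \<Lambda>_def by (auto intro!: exI[of _ 0])
      moreover have "(0::real, 0::real) \<in> S" unfolding S_def region_def
        using z0[OF df] z0[OF dg] m_pos by simp
      ultimately show ?thesis unfolding P_def by simp
    qed
    have empty: "count_set f g m N \<gamma> M a1 b1 = {}" if gt: "real_of_int \<gamma> > K * T"
    proof (rule ccontr)
      assume "count_set f g m N \<gamma> M a1 b1 \<noteq> {}"
      then obtain a b where ab: "(a, b) \<in> P" "(a, b) \<noteq> (0, 0)" unfolding cs by auto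
      then have "(real_of_int a, real_of_int b) \<in> S" "\<gamma> dvd a" "\<gamma> dvd b" unfolding P_def \<Lambda>_def by auto
      then have "(real_of_int a, real_of_int b) \<in> {-(K*T)..K*T} \<times> {-(K*T)..K*T}" using Sbox by blast
      then have bnd: "\<bar>real_of_int a\<bar> \<le> K * T" "\<bar>real_of_int b\<bar> \<le> K * T" by auto
      show False
      proof (cases "a = 0")
        case True
        then have "b \<noteq> 0" using ab by simp
        then have "\<gamma> \<le> \<bar>b\<bar>" using dvd_imp_le_int[OF _ \<open>\<gamma> dvd b\<close>] g by simp
        then show False using bnd gt by linarith
      next
        case False
        then have "\<gamma> \<le> \<bar>a\<bar>" using dvd_imp_le_int[OF _ \<open>\<gamma> dvd a\<close>] g by simp
        then show False using bnd gt by linarith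
      qed
    qed
    define main where "main = N powr (1 / (6 * real m)) * measure lborel (region f g m 1) * real_of_int (gcd \<gamma> M)
              / (real_of_int \<gamma> ^ 2 * real_of_int M)"
    have Gpos: "gcd \<gamma> M > 0" using M by simp
    have GM: "gcd \<gamma> M \<le> M" using M by (simp add: gcd_le2_int)
    have mainS: "main = measure lborel S / real_of_int (d1 * d2)"
    proof -
      have mS: "measure lborel S = T^2 * V" unfolding S_def V_def T_def using region_measure[OF df dg m_pos N] by simp
      have h: "real_of_int \<gamma> ^ 2 * real_of_int M = real_of_int d1 * real_of_int d2 * real_of_int (gcd \<gamma> M)"
        using arg_cong[OF idx, of real_of_int] by simp
      have "main = T^2 * V * real_of_int (gcd \<gamma> M) / (real_of_int d1 * real_of_int d2 * real_of_int (gcd \<gamma> M))"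
        unfolding main_def T2 V_def h by simp
      also have "\<dots> = T^2 * V / (real_of_int d1 * real_of_int d2)" using Gpos by simp
      finally show ?thesis using mS by simp
    qed
    show "count_set f g m N \<gamma> M a1 b1 = {}" if "K * N powr (1 / (12 * real m)) < real_of_int \<gamma>"
      using empty that unfolding T_def by blast
    show "\<bar>real (card (count_set f g m N \<gamma> M a1 b1)) - N powr (1 / (6 * real m)) * measure lborel (region f g m 1)
              * real_of_int (gcd \<gamma> M) / (real_of_int \<gamma> ^ 2 * real_of_int M)\<bar>
         \<le> C * N powr (1 / (12 * real m)) / real_of_int \<gamma>"
    proof (cases "real_of_int \<gamma> > K * T")
      case True
      have m0: "main \<ge> 0" unfolding main_def using V0 Gpos M g by (simp add: V_def)
      have "main \<le> T^2 * V / real_of_int \<gamma> ^ 2"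
      proof -
        have "real_of_int (gcd \<gamma> M) / real_of_int M \<le> 1" using GM M by simp
        then have "T^2 * V * (real_of_int (gcd \<gamma> M) / real_of_int M) \<le> T^2 * V * 1"
          using V0 by (intro mult_left_mono) auto
        then show ?thesis unfolding main_def T2 V_def[symmetric] using g M
          by (simp add: field_simps)
      qed
      also have "\<dots> = (T / real_of_int \<gamma>) * (T / real_of_int \<gamma>) * V" by (simp add: power2_eq_square)
      also have "\<dots> \<le> (T / real_of_int \<gamma>) * 1 * V"
      proof -
        have "T / real_of_int \<gamma> \<le> 1"
        proof -
          have "T \<le> K * T" using K1 T by simp
          then show ?thesis using True g by simp
        qed
        then show ?thesis using T g V0 by (intro mult_right_mono mult_left_mono) auto
      qed
      also have "\<dots> \<le> C * T / real_of_int \<gamma>" using CV T g V0 by (simp add: divide_right_mono mult_right_mono mult.commute)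
      finally have "main \<le> C * T / real_of_int \<gamma>" .
      then show ?thesis using empty[OF True] m0 unfolding main_def[symmetric] T_def[symmetric] by simp
    next
      case False
      have KTg: "1 \<le> K * T / real_of_int \<gamma>" using False g by simp
      have Sc: "closed S" unfolding S_def by (rule region_closed)
      have KT0: "K * T \<ge> 0" using K1 T by simp
      note lc = lattice_count[OF Sc Sbox KT0 _ _ d1 d2 memb, of k]
      have rowf: "\<And>y. finite (frontier {x. (x,y) \<in> S}) \<and> card (frontier {x. (x,y) \<in> S}) \<le> k"
        unfolding S_def k_def by (rule region_rows[OF df dg])
      have colf: "\<And>x. finite (frontier {y. (x,y) \<in> S}) \<and> card (frontier {y. (x,y) \<in> S}) \<le> k"
        unfolding S_def k_def by (rule region_cols[OF df dg])
      have finP: "finite P" using lc(1)[OF rowf colf] unfolding P_def .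
      have err: "\<bar>real (card P) - main\<bar> \<le> k * (2 * (K * T) / d2 + 1) + 2 * (K * T) * k / d1"
        using lc(2)[OF rowf colf] unfolding P_def mainS by simp
      define u where "u = K * T / real_of_int \<gamma>"
      have e1: "2 * (K * T) / d2 \<le> 2 * u"
      proof -
        have "(K * T) / d2 \<le> K * T / real_of_int \<gamma>"
          using d2g g KT0 by (intro divide_left_mono) auto
        then show ?thesis unfolding u_def by simp
      qed
      have e2: "(K * T) / d1 \<le> u"
        unfolding u_def using d1g g KT0 by (intro divide_left_mono) auto
      have A: "k * (2 * (K * T) / d2 + 1) \<le> k * (3 * u)"
        using e1 KTg unfolding u_def[symmetric] by (intro mult_left_mono) auto
      have B: "2 * (K * T) * k / d1 = k * (2 * ((K * T) / d1))" by simp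
      have B2: "k * (2 * ((K * T) / d1)) \<le> k * (2 * u)" using e2 by (intro mult_left_mono) auto
      have err2: "\<bar>real (card P) - main\<bar> \<le> 5 * k * u"
        using err A B B2 by linarith
      have cP: "real (card (count_set f g m N \<gamma> M a1 b1)) = real (card P) - 1"
      proof -
        have "card P > 0" using finP P0 by (auto simp: card_gt_0_iff)
        then show ?thesis unfolding cs using finP P0 by (simp add: card_Diff_singleton of_nat_diff)
      qed
      have "\<bar>real (card (count_set f g m N \<gamma> M a1 b1)) - main\<bar> \<le> 5 * k * u + u"
        using err2 KTg unfolding cP u_def[symmetric] by linarith
      also have "\<dots> = (5 * real k + 1) * K * T / real_of_int \<gamma>" unfolding u_def by (simp add: field_simps add_divide_distrib)
      also have "\<dots> \<le> C * T / real_of_int \<gamma>"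
        using CK T g by (intro divide_right_mono mult_right_mono) auto
      finally show ?thesis unfolding main_def T_def .
    qed
  qed
qed

end
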